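(* Let $Q=(q_0,\ldots,q_n)$ be a weights vector and let $V=(\mathbf{v}_0,\mathbf{v}_1,\ldots,\mathbf{v}_n)\in\mathrm{Mat}(n,n+1;\mathbb{Z})$ be a fan matrix of $\mathbb{P}(Q)$, i.e. $\sum_{j=0}^nq_j\mathbf{v}_j=0$ and $|\det(\mathbf{v}_1,\ldots,\mathbf{v}_n)|=q_0$. Then the weighted transverse matrix $(V^0)^*_Q=((V^0)^{-1})^T\cdot\delta\,\mathrm{diag}(1/q_1,\ldots,1/q_n)$, where $V^0=(\mathbf{v}_1,\ldots,\mathbf{v}_n)$ and $\delta=\mathrm{lcm}(q_0,\ldots,q_n)$, has integer entries.
   Context: A weights vector is an $(n+1)$-tuple of positive integers with gcd $1$. *)

theory Defs
  imports "HOL-Analysis.Analysis"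
begin

text \<open>Dimension n is the cardinality of the finite index type 'n. A weights vector
  Q = (q_0,...,q_n) is represented by q0 :: nat and q :: 'n \<Rightarrow> nat (q_1..q_n).
  A fan matrix V = (v_0,...,v_n) is represented by v0 :: int^'n and v :: 'n \<Rightarrow> int^'n.\<close>

definition weights_vector :: "nat \<Rightarrow> ('n::finite \<Rightarrow> nat) \<Rightarrow> bool" where
  "weights_vector q0 q \<longleftrightarrow> q0 > 0 \<and> (\<forall>j. q j > 0) \<and> Gcd (insert q0 (range q)) = 1"

definition is_fan_matrix :: "nat \<Rightarrow> ('n::finite \<Rightarrow> nat) \<Rightarrow> int^'n \<Rightarrow> ('n \<Rightarrow> int^'n) \<Rightarrow> bool" where
  "is_fan_matrix q0 q v0 v \<longleftrightarrow>
     of_nat q0 *s v0 + (\<Sum>j\<in>UNIV. of_nat (q j) *s v j) = 0 \<and>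
     \<bar>det (\<chi> i j. v j $ i)\<bar> = int q0"

definition V0_matrix :: "('n::finite \<Rightarrow> int^'n) \<Rightarrow> int^'n^'n" where
  "V0_matrix v = (\<chi> i j. v j $ i)"

definition weight_lcm :: "nat \<Rightarrow> ('n::finite \<Rightarrow> nat) \<Rightarrow> nat" where
  "weight_lcm q0 q = Lcm (insert q0 (range q))"

definition weighted_transverse_matrix ::
  "nat \<Rightarrow> ('n::finite \<Rightarrow> nat) \<Rightarrow> ('n \<Rightarrow> int^'n) \<Rightarrow> real^'n^'n" where
  "weighted_transverse_matrix q0 q v =
     transpose (matrix_inv ((\<chi> i j. real_of_int (V0_matrix v $ i $ j)))) **
     (real (weight_lcm q0 q) *\<^sub>R (\<chi> i j. if i = j then 1 / real (q j) else 0))"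

end

theory Submission
  imports Defs
begin

lemma det_of_int_matrix:
  fixes M :: "int^'n::finite^'n"
  shows "det (\<chi> i j. real_of_int (M $ i $ j)) = real_of_int (det M)"
  unfolding det_def by (simp add: of_int_sum of_int_prod)

lemma det_Ints:
  fixes M :: "real^'n::finite^'n"
  assumes "\<And>i j. M $ i $ j \<in> \<int>"
  shows "det M \<in> \<int>"
  unfolding det_def using assms
  by (intro Ints_sum Ints_mult Ints_prod) auto

lemma gcd_Ints:
  fixes r :: real
  assumes "finite S" "\<forall>m\<in>S. r * real m \<in> \<int>"
  shows "r * real (Gcd S) \<in> \<int>"
  using assms
proof (induction S rule: finite_induct)
  case empty
  then show ?case by simp
next
  case (insert a A)
  then have ha: "r * real a \<in> \<int>" and hA: "r * real (Gcd A) \<in> \<int>" by auto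
  obtain u v :: int where uv: "u * int a + v * int (Gcd A) = gcd (int a) (int (Gcd A))"
    using bezout_int by blast
  have "real (gcd a (Gcd A)) = real_of_int u * real a + real_of_int v * real (Gcd A)"
  proof -
    have "int (gcd a (Gcd A)) = u * int a + v * int (Gcd A)"
      using uv by (simp add: gcd_int_def)
    then have "real_of_int (int (gcd a (Gcd A))) = real_of_int (u * int a + v * int (Gcd A))"
      by simp
    then show ?thesis by simp
  qed
  then have "r * real (Gcd (insert a A)) = real_of_int u * (r * real a) + real_of_int v * (r * real (Gcd A))"
    by (simp add: Gcd_insert algebra_simps)
  also have "\<dots> \<in> \<int>" using ha hA by (metis Ints_add Ints_mult Ints_of_int)
  finally show ?case .
qed

lemma sign_Ints:
  fixes c d D :: real
  assumes "\<bar>d\<bar> = c" "c > 0" "D \<in> \<int>"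
  shows "c * (D / d) \<in> \<int>"
proof (cases "d \<ge> 0")
  case True
  then have "c * (D / d) = D" using assms by auto
  then show ?thesis using assms by simp
next
  case False
  then have "c * (D / d) = - D" using assms by auto
  then show ?thesis using assms by simp
qed

theorem mainTheorem11:
  fixes q0 :: nat and q :: "'n::finite \<Rightarrow> nat" and v0 :: "int^'n" and v :: "'n \<Rightarrow> int^'n"
  assumes "weights_vector q0 q"
    and "is_fan_matrix q0 q v0 v"
  shows "\<forall>i j. weighted_transverse_matrix q0 q v $ i $ j \<in> \<int>"
proof (intro allI)
  fix i j :: 'n
  have q0pos: "q0 > 0" and qpos: "\<And>j. q j > 0" and gcd1: "Gcd (insert q0 (range q)) = 1"
    using assms(1) unfolding weights_vector_def by auto
  have rel: "of_nat q0 *s v0 + (\<Sum>j\<in>UNIV. of_nat (q j) *s v j) = 0"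
    and detV: "\<bar>det (\<chi> i j. v j $ i)\<bar> = int q0"
    using assms(2) unfolding is_fan_matrix_def by auto
  define A :: "real^'n^'n" where "A = (\<chi> i j. real_of_int (V0_matrix v $ i $ j))"
  define b0 :: "real^'n" where "b0 = (\<chi> i. real_of_int (v0 $ i))"
  define u :: "real^'n" where "u = (\<chi> l. - real (q l) / real q0)"
  define \<delta> where "\<delta> = weight_lcm q0 q"
  define MI where "MI = matrix_inv A"
  have Aent: "A $ r $ l = real_of_int (v l $ r)" for r l
    unfolding A_def V0_matrix_def by simp
  have detA: "\<bar>det A\<bar> = real q0"
  proof -
    have "det A = real_of_int (det (\<chi> i j. v j $ i))"
      unfolding A_def V0_matrix_def using det_of_int_matrix[of "\<chi> i j. v j $ i"] by simp
    then show ?thesis using detV by (metis of_int_abs of_int_of_nat_eq)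
  qed
  have detA0: "det A \<noteq> 0" using detA q0pos by auto
  have "invertible A" using detA0 invertible_det_nz by blast
  then have MI: "A ** MI = mat 1" "MI ** A = mat 1"
    unfolding MI_def matrix_inv_def invertible_def by (metis (mono_tags, lifting) someI_ex)+
  have Au: "A *v u = b0"
  proof -
    have "(A *v u) $ r = b0 $ r" for r
    proof -
      have c: "real q0 * real_of_int (v0 $ r) + (\<Sum>l\<in>UNIV. real (q l) * real_of_int (v l $ r)) = 0"
      proof -
        have "(of_nat q0 *s v0 + (\<Sum>j\<in>UNIV. of_nat (q j) *s v j)) $ r = 0"
          using rel by simp
        then have "int q0 * v0 $ r + (\<Sum>l\<in>UNIV. int (q l) * v l $ r) = 0"
          by (simp add: sum_component)
        then have "real_of_int (int q0 * v0 $ r + (\<Sum>l\<in>UNIV. int (q l) * v l $ r)) = 0"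
          by simp
        then show ?thesis by (simp add: of_int_sum)
      qed
      have "(A *v u) $ r = (\<Sum>l\<in>UNIV. real_of_int (v l $ r) * (- real (q l) / real q0))"
        unfolding matrix_vector_mult_def u_def by (simp add: Aent)
      also have "\<dots> = - (\<Sum>l\<in>UNIV. real (q l) * real_of_int (v l $ r)) / real q0"
        by (simp add: sum_divide_distrib sum_negf algebra_simps)
      also have "\<dots> = real_of_int (v0 $ r)"
        using c q0pos by (simp add: field_simps)
      finally show ?thesis unfolding b0_def by simp
    qed
    then show ?thesis by (simp add: vec_eq_iff)
  qed
  define e :: "real^'n" where "e = axis i 1"
  define x :: "real^'n" where "x = MI *v e"
  have xj: "x $ j = MI $ j $ i"
    unfolding x_def e_def matrix_vector_mult_def axis_def
    by (simp add: if_distrib cong: if_cong)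
  have Ax: "A *v x = e"
    unfolding x_def by (simp add: matrix_vector_mul_assoc MI)
  have uniq: "z = x" if "A *v z = e" for z
  proof -
    have "MI *v (A *v z) = MI *v e" using that by simp
    then show ?thesis unfolding x_def by (simp add: matrix_vector_mul_assoc MI)
  qed
  have eInts: "e $ r \<in> \<int>" for r unfolding e_def axis_def by simp
  have AInts: "A $ r $ l \<in> \<int>" for r l by (simp add: Aent)
  have b0Ints: "b0 $ r \<in> \<int>" for r unfolding b0_def by simp
  have dvdq: "q l dvd \<delta>" for l
    unfolding \<delta>_def weight_lcm_def by (simp add: dvd_Lcm)
  have dvdq0: "q0 dvd \<delta>"
    unfolding \<delta>_def weight_lcm_def by (simp add: dvd_Lcm)
  have dq: "real \<delta> / real (q l) \<in> \<int>" for l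
  proof -
    obtain m where "\<delta> = q l * m" using dvdq by blast
    then have "real \<delta> / real (q l) = real m" using qpos[of l] by simp
    then show ?thesis by simp
  qed
  have dq0: "real \<delta> / real q0 \<in> \<int>"
  proof -
    obtain m where "\<delta> = q0 * m" using dvdq0 by blast
    then have "real \<delta> / real q0 = real m" using q0pos by simp
    then show ?thesis by simp
  qed
  define r where "r = x $ j * real \<delta> / real (q j)"
  have Wij: "weighted_transverse_matrix q0 q v $ i $ j = r"
  proof -
    have "weighted_transverse_matrix q0 q v $ i $ j
        = (\<Sum>l\<in>UNIV. MI $ l $ i * (real \<delta> * (if l = j then 1 / real (q j) else 0)))"
      unfolding weighted_transverse_matrix_def MI_def A_def \<delta>_def
      by (simp add: matrix_matrix_mult_def transpose_def)
    also have "\<dots> = MI $ j $ i * real \<delta> / real (q j)"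
      by (simp add: if_distrib cong: if_cong)
    finally show ?thesis unfolding r_def xj by simp
  qed
  have r0: "r * real q0 \<in> \<int>"
  proof -
    have "x $ j = det (\<chi> a b. if b = j then e $ a else A $ a $ b) / det A"
      using cramer[OF detA0, of x e] Ax by simp
    then have "real q0 * x $ j \<in> \<int>"
      using sign_Ints[OF detA] q0pos det_Ints[of "\<chi> a b. if b = j then e $ a else A $ a $ b"]
        eInts AInts by simp
    then have "(real q0 * x $ j) * (real \<delta> / real (q j)) \<in> \<int>"
      using dq by (metis Ints_mult)
    then show ?thesis unfolding r_def by (simp add: algebra_simps)
  qed
  have rk: "r * real (q k) \<in> \<int>" for k
  proof -
    define B where "B = (\<chi> a b. if b = k then b0 $ a else A $ a $ b)"
    have detB: "det B = u $ k * det A"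
      using cramer_lemma[where A=A and x=u and k=k] unfolding B_def Au .
    have detBabs: "\<bar>det B\<bar> = real (q k)"
      using detB detA q0pos unfolding u_def by (simp add: abs_mult)
    have detB0: "det B \<noteq> 0" using detBabs qpos[of k] by auto
    define y :: "real^'n" where "y = (\<chi> l. det (\<chi> a b. if b = l then e $ a else B $ a $ b) / det B)"
    have By: "B *v y = e" using cramer[OF detB0, of y e] unfolding y_def by simp
    have yInts: "real (q k) * y $ l \<in> \<int>" for l
    proof -
      have "det (\<chi> a b. if b = l then e $ a else B $ a $ b) \<in> \<int>"
        by (rule det_Ints) (auto simp: B_def eInts AInts b0Ints)
      then show ?thesis unfolding y_def using sign_Ints[OF detBabs] qpos[of k] by simp
    qed
    define z :: "real^'n" where "z = (\<chi> l. (if l = k then 0 else y $ l) + y $ k * u $ l)"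
    have Az: "A *v z = e"
    proof -
      have "(A *v z) $ a = e $ a" for a
      proof -
        have "(A *v z) $ a = (\<Sum>l\<in>UNIV. A $ a $ l * (if l = k then 0 else y $ l))
              + y $ k * (A *v u) $ a"
          unfolding matrix_vector_mult_def z_def
          by (simp add: algebra_simps sum.distrib sum_distrib_left)
        also have "\<dots> = (\<Sum>l\<in>UNIV. B $ a $ l * y $ l)"
        proof -
          have "(\<Sum>l\<in>UNIV. B $ a $ l * y $ l)
              = (\<Sum>l\<in>UNIV. A $ a $ l * (if l = k then 0 else y $ l) + (if l = k then b0 $ a * y $ k else 0))"
            unfolding B_def by (intro sum.cong) auto
          also have "\<dots> = (\<Sum>l\<in>UNIV. A $ a $ l * (if l = k then 0 else y $ l)) + b0 $ a * y $ k"
            by (simp add: sum.distrib)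
          finally show ?thesis using Au by (simp add: mult.commute)
        qed
        also have "\<dots> = (B *v y) $ a" unfolding matrix_vector_mult_def by simp
        finally show ?thesis using By by simp
      qed
      then show ?thesis by (simp add: vec_eq_iff)
    qed
    have xz: "x $ j = (if j = k then 0 else y $ j) - y $ k * real (q j) / real q0"
    proof -
      have "x = z" using uniq[OF Az] by simp
      then have "x $ j = z $ j" by simp
      then show ?thesis unfolding z_def u_def by simp
    qed
    have "r * real (q k) = (if j = k then 0 else (real (q k) * y $ j) * (real \<delta> / real (q j)))
          - (real (q k) * y $ k) * (real \<delta> / real q0)"
      unfolding r_def xz using qpos[of j] q0pos by (simp add: field_simps)
    also have "\<dots> \<in> \<int>"
    proof -
      have t1: "(real (q k) * y $ j) * (real \<delta> / real (q j)) \<in> \<int>"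
        using yInts dq by (metis Ints_mult)
      have t2: "(real (q k) * y $ k) * (real \<delta> / real q0) \<in> \<int>"
        using yInts dq0 by (metis Ints_mult)
      show ?thesis using t1 t2 by (cases "j = k") (simp_all only: simp_thms if_True if_False Ints_diff Ints_0)
    qed
    finally show ?thesis .
  qed
  have "r * real (Gcd (insert q0 (range q))) \<in> \<int>"
    using r0 rk by (intro gcd_Ints) auto
  then show "weighted_transverse_matrix q0 q v $ i $ j \<in> \<int>"
    using gcd1 Wij by simp
qed

end
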